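(* Let $a,b\in\mathbb{C}$ with $a\neq0$. Let $U\subseteq\mathbb{C}$ be open and $\lambda:U\to\mathbb{C}$ holomorphic such that, with $y=e^{\lambda}$ and $y^{p}:=e^{p\lambda}$, $y(x)^a=1+axy(x)^b$ for all $x\in U$. (i) If $b\neq1$ and $a-b+1\neq0$, then the function $$F(x)=x\,y(x)-\frac1a\left[\frac{y(x)^{a-b+1}}{a-b+1}-\frac{y(x)^{1-b}}{1-b}\right]$$ satisfies $F'(x)=y(x)$ for all $x\in U$ (wherever $1-bxy^{b-a}\neq0$), i.e. $F$ is an antiderivative of $y$. (ii) If $b=1$, then $F(x)=x\,y(x)-\frac1a\left[\frac{y(x)^{a}}{a}-\lambda(x)\right]$ satisfies $F'(x)=y(x)$ there. (iii) If $b\neq1$, $a-b+1\neq0$, $U$ is a disc centred at $0$ and $\lambda(0)=0$ (so $y(0)=1$), then for all $x\in U$ (along paths in $U$ avoiding points where $1-bty^{b-a}=0$) $$\int_0^x y(t)\,dt=\frac1a\left[\frac{a-b}{a-b+1}\bigl(y(x)^{a-b+1}-1\bigr)+\frac{b}{1-b}\bigl(y(x)^{1-b}-1\bigr)\right].$$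
   Context: This concerns (branches of) solutions of $y^a=1+axy^b$ (the ultra-radical), with complex powers of $y$ computed consistently via the fixed holomorphic logarithm $\lambda=\log y$. In (iii), $y$ is the principal branch, which near $0$ is given by the master series $M(1;a;b;x)=1+x+\sum_{\ell\ge2}\frac{x^\ell}{\ell!}\prod_{\gamma=1}^{\ell-1}(1-a\gamma+b\ell)$. *)

theory Defs
  imports "HOL-Complex_Analysis.Complex_Analysis"
begin

text \<open>Complex powers of y = exp lam computed via the fixed logarithm lam: y^p := exp (p * lam).\<close>

end

theory Submission
  imports Defs
begin

lemma key_id:
  fixes a b x l :: complex
  assumes "exp (a * l) = 1 + a * x * exp (b * l)"
  shows "exp ((a - b + 1) * l) - exp ((1 - b) * l) = a * x * exp l"
proof -
  have e1: "exp ((a - b + 1) * l) = exp (a * l) * exp ((1 - b) * l)"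
    by (simp add: exp_add[symmetric] algebra_simps)
  have e2: "exp ((1 - b) * l) * exp (b * l) = exp l"
    by (simp add: exp_add[symmetric] algebra_simps)
  have "exp ((a - b + 1) * l) - exp ((1 - b) * l) = (exp (a * l) - 1) * exp ((1 - b) * l)"
    using e1 by (simp add: algebra_simps)
  also have "\<dots> = a * x * (exp ((1 - b) * l) * exp (b * l))"
    using assms by (simp add: algebra_simps)
  also have "\<dots> = a * x * exp l" using e2 by simp
  finally show ?thesis .
qed

lemma ring_div_helper:
  fixes c d e u v L x a :: complex
  assumes "c \<noteq> 0" "d \<noteq> 0"
  shows "(e + x * (e * L) - (1 / a) * (u * (c * L) / c - v * (d * L) / d))
        = e + L * (x * e - (1 / a) * (u - v))"
  using assms by (simp add: field_simps)

lemma fin_helper: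
  fixes a b u v :: complex
  assumes "a \<noteq> 0" "a - b + 1 \<noteq> 0" "1 - b \<noteq> 0"
  shows "(u - v) / a - (1 / a) * (u / (a - b + 1) - v / (1 - b))
     - (0 - (1 / a) * (1 / (a - b + 1) - 1 / (1 - b)))
     = (1 / a) * ((a - b) / (a - b + 1) * (u - 1) + b / (1 - b) * (v - 1))"
proof -
  define c d where "c = a - b + 1" and "d = 1 - b"
  have c: "c \<noteq> 0" and d: "d \<noteq> 0" using assms by (auto simp: c_def d_def)
  have ab: "a - b = c - 1" "b = 1 - d" by (auto simp: c_def d_def)
  have h: "u - v - (u / c - v / d) + (1 / c - 1 / d) = (c - 1) / c * (u - 1) + (1 - d) / d * (v - 1)"
    using c d by (simp add: field_simps)
  have "(u - v) / a - (1 / a) * (u / (a - b + 1) - v / (1 - b))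
     - (0 - (1 / a) * (1 / (a - b + 1) - 1 / (1 - b)))
     = (1 / a) * (u - v - (u / c - v / d) + (1 / c - 1 / d))"
    unfolding c_def d_def by (simp add: algebra_simps diff_divide_distrib add_divide_distrib)
  also have "\<dots> = (1 / a) * ((a - b) / (a - b + 1) * (u - 1) + b / (1 - b) * (v - 1))"
    unfolding h ab(1) by (simp add: c_def d_def)
  finally show ?thesis .
qed

theorem mainTheorem10:
  fixes a b :: complex and U :: "complex set" and lam :: "complex \<Rightarrow> complex"
  assumes "a \<noteq> 0"
    and "open U"
    and "lam holomorphic_on U"
    and "\<forall>x\<in>U. exp (a * lam x) = 1 + a * x * exp (b * lam x)"
  shows
    "(b \<noteq> 1 \<and> a - b + 1 \<noteq> 0 \<longrightarrow>
       (\<forall>x\<in>U. 1 - b * x * exp ((b - a) * lam x) \<noteq> 0 \<longrightarrow>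
          ((\<lambda>t. t * exp (lam t)
                 - (1 / a) * (exp ((a - b + 1) * lam t) / (a - b + 1)
                              - exp ((1 - b) * lam t) / (1 - b)))
            has_field_derivative exp (lam x)) (at x)))
   \<and> (b = 1 \<longrightarrow>
       (\<forall>x\<in>U. 1 - b * x * exp ((b - a) * lam x) \<noteq> 0 \<longrightarrow>
          ((\<lambda>t. t * exp (lam t) - (1 / a) * (exp (a * lam t) / a - lam t))
            has_field_derivative exp (lam x)) (at x)))
   \<and> (b \<noteq> 1 \<and> a - b + 1 \<noteq> 0 \<and> (\<exists>r. U = ball 0 r) \<and> lam 0 = 0 \<longrightarrow>
       (\<forall>x\<in>U. \<forall>g. valid_path g \<and> pathstart g = 0 \<and> pathfinish g = x
              \<and> path_image g \<subseteq> U
              \<and> (\<forall>t\<in>path_image g. 1 - b * t * exp ((b - a) * lam t) \<noteq> 0) \<longrightarrow>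
          ((\<lambda>t. exp (lam t)) has_contour_integral
             (1 / a) * ((a - b) / (a - b + 1) * (exp ((a - b + 1) * lam x) - 1)
                        + b / (1 - b) * (exp ((1 - b) * lam x) - 1))) g))"
proof -
  define F where "F = (\<lambda>t. t * exp (lam t)
                 - (1 / a) * (exp ((a - b + 1) * lam t) / (a - b + 1)
                              - exp ((1 - b) * lam t) / (1 - b)))"
  have dl: "\<And>x. x \<in> U \<Longrightarrow> (lam has_field_derivative deriv lam x) (at x)"
    using assms(2,3) holomorphic_derivI by blast
  have D1: "(F has_field_derivative exp (lam x)) (at x)"
    if x: "x \<in> U" and nz: "b \<noteq> 1" "a - b + 1 \<noteq> 0" for x
  proof -
    have k: "exp ((a - b + 1) * lam x) - exp ((1 - b) * lam x) = a * x * exp (lam x)"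
      using key_id assms(4) x by blast
    have nz2: "1 - b \<noteq> 0" using nz by simp
    have "(F has_field_derivative
        (exp (lam x) + x * (exp (lam x) * deriv lam x)
         - (1 / a) * (exp ((a - b + 1) * lam x) * ((a - b + 1) * deriv lam x) / (a - b + 1)
                   - exp ((1 - b) * lam x) * ((1 - b) * deriv lam x) / (1 - b)))) (at x)"
      unfolding F_def using dl[OF x]
      by (auto intro!: derivative_eq_intros)
    moreover have "(exp (lam x) + x * (exp (lam x) * deriv lam x)
         - (1 / a) * (exp ((a - b + 1) * lam x) * ((a - b + 1) * deriv lam x) / (a - b + 1)
                   - exp ((1 - b) * lam x) * ((1 - b) * deriv lam x) / (1 - b)))
        = exp (lam x) + deriv lam x * (x * exp (lam x)
             - (1 / a) * (exp ((a - b + 1) * lam x) - exp ((1 - b) * lam x)))"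
      using nz nz2 by (simp only: ring_div_helper[OF nz(2) nz2])
    moreover have "x * exp (lam x)
             - (1 / a) * (exp ((a - b + 1) * lam x) - exp ((1 - b) * lam x)) = 0"
      using k assms(1) by simp
    ultimately show ?thesis by simp
  qed
  have D2: "((\<lambda>t. t * exp (lam t) - (1 / a) * (exp (a * lam t) / a - lam t))
            has_field_derivative exp (lam x)) (at x)"
    if x: "x \<in> U" and b1: "b = 1" for x
  proof -
    have k: "exp (a * lam x) - 1 = a * x * exp (lam x)"
      using assms(4) x b1 by simp
    have "((\<lambda>t. t * exp (lam t) - (1 / a) * (exp (a * lam t) / a - lam t))
            has_field_derivative
        (exp (lam x) + x * (exp (lam x) * deriv lam x)
         - (1 / a) * (exp (a * lam x) * (a * deriv lam x) / a - deriv lam x))) (at x)"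
      using dl[OF x] by (auto intro!: derivative_eq_intros)
    moreover have "(exp (lam x) + x * (exp (lam x) * deriv lam x)
         - (1 / a) * (exp (a * lam x) * (a * deriv lam x) / a - deriv lam x))
       = exp (lam x) + deriv lam x * (x * exp (lam x) - (exp (a * lam x) - 1) / a)"
      using assms(1) by (simp add: field_simps)
    moreover have "x * exp (lam x) - (exp (a * lam x) - 1) / a = 0"
      using k assms(1) by simp
    ultimately show ?thesis by simp
  qed
  have P3: "((\<lambda>t. exp (lam t)) has_contour_integral
             (1 / a) * ((a - b) / (a - b + 1) * (exp ((a - b + 1) * lam x) - 1)
                        + b / (1 - b) * (exp ((1 - b) * lam x) - 1))) g"
    if nz: "b \<noteq> 1" "a - b + 1 \<noteq> 0" and l0: "lam 0 = 0" and x: "x \<in> U"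
      and g: "valid_path g" "pathstart g = 0" "pathfinish g = x" "path_image g \<subseteq> U" for x g
  proof -
    have "((\<lambda>t. exp (lam t)) has_contour_integral (F (pathfinish g) - F (pathstart g))) g"
      using contour_integral_primitive[OF _ g(1) g(4), of F] D1 nz
      by (meson has_field_derivative_at_within)
    moreover have "F (pathfinish g) - F (pathstart g) =
       (1 / a) * ((a - b) / (a - b + 1) * (exp ((a - b + 1) * lam x) - 1)
                        + b / (1 - b) * (exp ((1 - b) * lam x) - 1))"
    proof -
      have k: "exp ((a - b + 1) * lam x) - exp ((1 - b) * lam x) = a * x * exp (lam x)"
        using key_id assms(4) x by blast
      have nz2: "1 - b \<noteq> 0" using nz by simp
      have xe: "x * exp (lam x) = (exp ((a - b + 1) * lam x) - exp ((1 - b) * lam x)) / a"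
        using k assms(1) by simp
      have F0: "F 0 = 0 - (1 / a) * (1 / (a - b + 1) - 1 / (1 - b))"
        by (simp add: F_def l0)
      have Fx: "F x = (exp ((a - b + 1) * lam x) - exp ((1 - b) * lam x)) / a
          - (1 / a) * (exp ((a - b + 1) * lam x) / (a - b + 1) - exp ((1 - b) * lam x) / (1 - b))"
        unfolding F_def xe by simp
      show ?thesis unfolding g(2,3) F0 Fx
        by (rule fin_helper[OF assms(1) nz(2) nz2])
    qed
    ultimately show ?thesis by simp
  qed
  show ?thesis
    using D1 D2 P3 unfolding F_def by blast
qed

end
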